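(* In the following algorithm, each vertex $v$ is moved in the step "move vertices into place on the circle according to $O$" at most $\deg(v)-1$ times, where $\deg(v)$ is its final degree. Algorithm: maintain a straight-line drawing of an outerplanar graph $G$, revealed edge by edge in the ordered streaming model, with all vertices on a circle in the order in which they appear on the outer face; when a new edge $e=(p,q)$ arrives, if $q$ is a new vertex place it on the circle according to the ordering that includes $e$; otherwise add a virtual arc $e'$ between $p$ and $q$ according to the specification of $e$, crossing no existing edge, compute the order $O$ of vertices on the outer face taking $e'$ into account, and move the vertices into place on the circle according to $O$; then draw $e$.
   Context: Ordered streaming model: the graph is revealed one edge at a time, connected and outerplanar at all times, edges never disappearing, with each edge accompanied by its position in the clockwise order of edges around its endpoints. A graph is outerplanar if it has a planar drawing with all vertices on the outer face. *)

theory Defs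
  imports Main
begin

definition idx :: "'a list \<Rightarrow> 'a \<Rightarrow> nat" where
  "idx xs x = length (takeWhile (\<lambda>y. y \<noteq> x) xs)"

definition ins :: "nat \<Rightarrow> 'a \<Rightarrow> 'a list \<Rightarrow> 'a list" where
  "ins k x xs = take k xs @ x # drop k xs"

definition cyc_eq :: "'a list \<Rightarrow> 'a list \<Rightarrow> bool" where
  "cyc_eq xs ys \<longleftrightarrow> (\<exists>n. rotate n xs = ys)"

(* ===== Embedded graphs =====
   A rotation system rot :: 'v \<Rightarrow> 'v list gives, for every vertex, the clockwise
   cyclic order of its neighbours (the list is read cyclically).
   A circle arrangement C :: 'v list lists the vertices in clockwise order
   around the circle (read cyclically). *)

definition cpos :: "'v list \<Rightarrow> 'v \<Rightarrow> 'v \<Rightarrow> nat" where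
  "cpos C v w = (idx C w + length C - idx C v) mod length C"

(* chords ab and cd (four distinct endpoints) cross in the circle drawing *)
definition crossing :: "'v list \<Rightarrow> 'v \<Rightarrow> 'v \<Rightarrow> 'v \<Rightarrow> 'v \<Rightarrow> bool" where
  "crossing C a b c d \<longleftrightarrow> ((cpos C a c < cpos C a b) \<noteq> (cpos C a d < cpos C a b))"

(* C is a straight-line drawing of the embedded graph rot with all vertices on
   a circle: planar (no two chords cross) and respecting the given clockwise
   rotation at every vertex. *)
definition circ_valid :: "('v \<Rightarrow> 'v list) \<Rightarrow> 'v list \<Rightarrow> bool" where
  "circ_valid rot C \<longleftrightarrow>
     distinct C \<and>
     (\<forall>v. v \<notin> set C \<longrightarrow> rot v = []) \<and>
     (\<forall>v\<in>set C. distinct (rot v) \<and> set (rot v) \<subseteq> set C - {v} \<and>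
                 (\<forall>w\<in>set (rot v). v \<in> set (rot w))) \<and>
     (\<forall>a b c d. b \<in> set (rot a) \<and> d \<in> set (rot c) \<and> distinct [a, b, c, d]
                \<longrightarrow> \<not> crossing C a b c d) \<and>
     (\<forall>v\<in>set C. cyc_eq (rot v) (sort_key (cpos C v) (rot v)))"

(* ===== Stream events =====
   An event (p, q, i, j): new edge pq, where p is already present; q is
   inserted at position i of the clockwise order around p and p at position j
   of the clockwise order around q (j = 0 if q is new). *)
type_synonym 'v event = "'v \<times> 'v \<times> nat \<times> nat"

fun upd :: "('v \<Rightarrow> 'v list) \<Rightarrow> 'v event \<Rightarrow> ('v \<Rightarrow> 'v list)" where
  "upd rot (p, q, i, j) = rot(p := ins i q (rot p), q := ins j p (rot q))"

(* the event is admissible, and the graph stays outerplanar (with its given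
   embedding), i.e. it has a circle drawing respecting the rotation system *)
fun ext_ok :: "'v set \<Rightarrow> ('v \<Rightarrow> 'v list) \<Rightarrow> 'v event \<Rightarrow> bool" where
  "ext_ok V rot (p, q, i, j) \<longleftrightarrow>
     p \<in> V \<and> q \<noteq> p \<and> q \<notin> set (rot p) \<and>
     i \<le> length (rot p) \<and> j \<le> length (rot q) \<and>
     (\<exists>D. set D = insert q V \<and> circ_valid (upd rot (p, q, i, j)) D)"

fun stream_ok :: "'v set \<Rightarrow> ('v \<Rightarrow> 'v list) \<Rightarrow> 'v event list \<Rightarrow> bool" where
  "stream_ok V rot [] = True"
| "stream_ok V rot ((p, q, i, j) # es) \<longleftrightarrow>
     ext_ok V rot (p, q, i, j) \<and> stream_ok (insert q V) (upd rot (p, q, i, j)) es"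

(* ===== Faces =====
   A corner (v, i) is the angular sector at v going clockwise from the
   neighbour rot v ! i to the next neighbour rot v ! ((i+1) mod deg v).
   Face traversal (face kept on the left) maps a corner to the next corner. *)
definition nxt :: "('v \<Rightarrow> 'v list) \<Rightarrow> 'v \<times> nat \<Rightarrow> 'v \<times> nat" where
  "nxt rot c = (let v = fst c; i = snd c; b = rot v ! (Suc i mod length (rot v))
                in (b, idx (rot b) v))"

(* corner (v, i) is the corner of v facing the outside of the circle in
   drawing C: it ends at the first neighbour of v clockwise from v *)
definition is_outc :: "('v \<Rightarrow> 'v list) \<Rightarrow> 'v list \<Rightarrow> 'v \<Rightarrow> nat \<Rightarrow> bool" where
  "is_outc rot C v i \<longleftrightarrow> i < length (rot v) \<and>
     (\<forall>u\<in>set (rot v). cpos C v (rot v ! (Suc i mod length (rot v))) \<le> cpos C v u)"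

(* corner of the old embedding into which the new edge is inserted at v
   (the new neighbour is inserted at index k of rot v) *)
definition ins_corner :: "('v \<Rightarrow> 'v list) \<Rightarrow> 'v \<Rightarrow> nat \<Rightarrow> 'v \<times> nat" where
  "ins_corner rot v k = (v, (k + length (rot v) - 1) mod length (rot v))"

(* The virtual arc e' from corner cp to corner cq splits the face through cp:
   its boundary walk cp = c_0, c_1, ..., c_m = cq, ..., c_k = cp is split into
   the two sides {c_1..c_{m-1}} and {c_{m+1}..c_{k-1}}.  X is the side that
   gets enclosed by e' (it ceases to be on the outer face).  If the split face
   is the outer face of the current drawing, the new outer face (the other
   side together with p and q) must contain all vertices (outerplanarity);
   either side satisfying this may be chosen. *)
definition enclosed_side ::
  "('v \<Rightarrow> 'v list) \<Rightarrow> 'v list \<Rightarrow> 'v event \<Rightarrow> ('v \<times> nat) set \<Rightarrow> bool" where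
  "enclosed_side rot C e X \<longleftrightarrow>
     (case e of (p, q, i, j) \<Rightarrow>
       (let cp = ins_corner rot p i; cq = ins_corner rot q j;
            w = (\<lambda>n. (nxt rot ^^ n) cp) in
        \<exists>m k. 0 < m \<and> m < k \<and> w m = cq \<and> w k = cp \<and>
              (\<forall>n. 0 < n \<and> n < k \<longrightarrow> w n \<noteq> cp) \<and>
              (let S1 = w ` {0<..<m}; S2 = w ` {m<..<k};
                   outer = (\<exists>v l. is_outc rot C v l \<and> (v, l) \<in> w ` {0..<k}) in
               (X = S1 \<and> (outer \<longrightarrow> fst ` S2 \<union> {p, q} = set C)) \<or>
               (X = S2 \<and> (outer \<longrightarrow> fst ` S1 \<union> {p, q} = set C)))))"

(* vertices that have to be moved: those whose outside corner gets enclosed *)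
definition moved :: "('v \<Rightarrow> 'v list) \<Rightarrow> 'v list \<Rightarrow> ('v \<times> nat) set \<Rightarrow> 'v set" where
  "moved rot C X = {v \<in> set C. \<exists>l. is_outc rot C v l \<and> (v, l) \<in> X}"

(* ===== One step of the algorithm =====
   alg_step rot C e C' M: with current embedding rot and circle drawing C,
   event e arrives; the new drawing is C' and M is the set of vertices moved
   in the step "move vertices into place on the circle according to O". *)
fun alg_step :: "('v \<Rightarrow> 'v list) \<Rightarrow> 'v list \<Rightarrow> 'v event \<Rightarrow> 'v list \<Rightarrow> 'v set \<Rightarrow> bool" where
  "alg_step rot C (p, q, i, j) C' M \<longleftrightarrow>
     circ_valid (upd rot (p, q, i, j)) C' \<and>
     (if q \<notin> set C then
        M = {} \<and> (\<exists>k\<le>length C. C' = ins k q C)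
      else
        (\<exists>X. enclosed_side rot C (p, q, i, j) X \<and> M = moved rot C X) \<and>
        cyc_eq (filter (\<lambda>v. v \<notin> M) C) (filter (\<lambda>v. v \<notin> M) C'))"

inductive alg_run ::
  "('v \<Rightarrow> 'v list) \<Rightarrow> 'v list \<Rightarrow> 'v event list \<Rightarrow> ('v \<Rightarrow> 'v list) \<Rightarrow> 'v list \<Rightarrow> 'v set list \<Rightarrow> bool"
where
  run_Nil: "alg_run rot C [] rot C []"
| run_Cons: "alg_step rot C e C' M \<Longrightarrow> alg_run (upd rot e) C' es rot'' C'' Ms \<Longrightarrow>
             alg_run rot C (e # es) rot'' C'' (M # Ms)"

end

theory Submission
  imports Defs
begin


lemma idx_Cons: "idx (x#xs) y = (if x = y then 0 else Suc (idx xs y))"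
  by (simp add: idx_def)

lemma idx_nth: "distinct xs \<Longrightarrow> t < length xs \<Longrightarrow> idx xs (xs!t) = t"
proof (induction xs arbitrary: t)
  case Nil then show ?case by simp
next
  case (Cons x xs)
  show ?case
  proof (cases t)
    case 0 then show ?thesis by (simp add: idx_Cons)
  next
    case (Suc t')
    with Cons have "xs!t' \<noteq> x" "t' < length xs" by (auto simp: nth_mem)
    with Cons Suc show ?thesis by (auto simp: idx_Cons)
  qed
qed

lemma idx_less: "x \<in> set xs \<Longrightarrow> idx xs x < length xs"
  by (induction xs) (auto simp: idx_Cons)

lemma nth_idx: "x \<in> set xs \<Longrightarrow> xs ! idx xs x = x"
  by (induction xs) (auto simp: idx_Cons)

lemma ins_length: "i \<le> length r \<Longrightarrow> length (ins i q r) = Suc (length r)"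
  by (simp add: ins_def)

lemma ins_set: "set (ins i q r) = insert q (set r)"
  unfolding ins_def by (metis append_take_drop_id set_append set_simps(2) Un_insert_right Un_commute insert_commute)

lemma ins_distinct: "distinct r \<Longrightarrow> q \<notin> set r \<Longrightarrow> distinct (ins i q r)"
  unfolding ins_def using set_take_disj_set_drop_if_distinct[of r i i]
  by (auto simp: distinct_append dest: in_set_takeD in_set_dropD)

lemma ins_nth: "i \<le> length r \<Longrightarrow> s \<le> length r \<Longrightarrow>
   ins i q r ! s = (if s < i then r!s else if s = i then q else r!(s - 1))"
proof -
  assume a: "i \<le> length r" "s \<le> length r"
  show ?thesis
  proof (cases "s < i")
    case True then show ?thesis using a by (simp add: ins_def nth_append)
  next
    case False
    then obtain t where t: "s = i + t" by (metis le_add_diff_inverse not_less)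
    show ?thesis using a t by (cases t) (auto simp: ins_def nth_append)
  qed
qed



definition succ :: "'v list \<Rightarrow> 'v \<Rightarrow> 'v" where
  "succ xs c = xs ! (Suc (idx xs c) mod length xs)"

lemma ia_eq: assumes "0 < (d::nat)" "i \<le> d" shows "(i + d - 1) mod d = (if i = 0 then d - 1 else i - 1)"
proof (cases i)
  case 0 then show ?thesis using assms by simp
next
  case (Suc i')
  have "i + d - 1 = i' + d" "i' < d" using Suc assms by auto
  then show ?thesis using Suc by simp
qed

lemma succ_ins:
  assumes dr: "distinct r" and q: "q \<notin> set r" and ne: "r \<noteq> []" and il: "i \<le> length r"
    and a: "a = r ! ((i + length r - 1) mod length r)"
  shows "c \<in> set r \<Longrightarrow> succ (ins i q r) c = (if c = a then q else succ r c)"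
    and "succ (ins i q r) q = succ r a"
proof -
  define d where "d = length r"
  have d0: "0 < d" using ne d_def by simp
  define ia where "ia = (if i = 0 then d - 1 else i - 1)"
  have ia: "a = r ! ia" "ia < d" using a ia_eq[OF d0, of i] il d0 unfolding d_def ia_def by auto
  have idxa: "idx r a = ia" using ia dr idx_nth d_def by metis
  have dr': "distinct (ins i q r)" using dr q ins_distinct by metis
  have len': "length (ins i q r) = Suc d" using il ins_length d_def by metis
  have nth': "\<And>s. s \<le> d \<Longrightarrow> ins i q r ! s = (if s < i then r!s else if s = i then q else r!(s - 1))"
    using ins_nth il d_def by metis
  have idxq: "idx (ins i q r) q = i"
    using idx_nth[OF dr', of i] nth'[of i] il len' d_def by simp
  show "succ (ins i q r) q = succ r a"
  proof (cases "i < d")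
    case True
    then have "succ (ins i q r) q = r ! i" unfolding succ_def idxq len' using nth'[of "Suc i"] by simp
    moreover have "Suc ia mod d = i" using True unfolding ia_def by (cases i) auto
    ultimately show ?thesis unfolding succ_def idxa d_def by simp
  next
    case False
    then have "i = d" using il d_def by simp
    then have "succ (ins i q r) q = r ! 0" unfolding succ_def idxq len' using nth'[of 0] d0 by simp
    moreover have "Suc ia mod d = 0" using \<open>i = d\<close> d0 unfolding ia_def by auto
    ultimately show ?thesis unfolding succ_def idxa d_def by simp
  qed
  assume "c \<in> set r"
  then obtain t where t: "t < d" "c = r ! t" unfolding d_def by (metis in_set_conv_nth)
  have idxc: "idx r c = t" using t dr idx_nth d_def by metis
  show "succ (ins i q r) c = (if c = a then q else succ r c)"
  proof (cases "t < i")
    case True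
    have "idx (ins i q r) c = t" using idx_nth[OF dr', of t] nth'[of t] True t len' by simp
    then have s1: "succ (ins i q r) c = ins i q r ! (Suc t)" unfolding succ_def len' using True il d_def by simp
    show ?thesis
    proof (cases "Suc t = i")
      case True
      then have "c = a" using t ia unfolding ia_def by auto
      then show ?thesis using s1 nth'[of "Suc t"] True il d_def by simp
    next
      case False
      then have "c \<noteq> a" using t ia dr \<open>t < i\<close> unfolding ia_def d_def
        by (auto simp: nth_eq_iff_index_eq)
      moreover have "succ r c = r ! Suc t" unfolding succ_def idxc using False \<open>t < i\<close> il d_def by simp
      ultimately show ?thesis using s1 nth'[of "Suc t"] False \<open>t < i\<close> il d_def by simp
    qed
  next
    case False
    have "idx (ins i q r) c = Suc t" using idx_nth[OF dr', of "Suc t"] nth'[of "Suc t"] False t len' by simp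
    then have s1: "succ (ins i q r) c = ins i q r ! (Suc (Suc t) mod Suc d)" unfolding succ_def len' by simp
    show ?thesis
    proof (cases "Suc t < d")
      case True
      then have "c \<noteq> a" using t ia dr False unfolding ia_def d_def
        by (auto simp: nth_eq_iff_index_eq)
      moreover have "succ r c = r ! Suc t" unfolding succ_def idxc using True d_def by simp
      ultimately show ?thesis using s1 nth'[of "Suc (Suc t)"] True False by simp
    next
      case False2: False
      then have td: "Suc t = d" using t by simp
      then have s2: "succ (ins i q r) c = ins i q r ! 0" using s1 by simp
      show ?thesis
      proof (cases "i = 0")
        case True
        then have "c = a" using t ia td unfolding ia_def by auto
        then show ?thesis using s2 nth'[of 0] True by simp
      next
        case False
        then have "c \<noteq> a" using t ia dr td \<open>\<not> t < i\<close> unfolding ia_def d_def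
          by (auto simp: nth_eq_iff_index_eq)
        moreover have "succ r c = r ! 0" unfolding succ_def idxc using td d_def by simp
        ultimately show ?thesis using s2 nth'[of 0] False by simp
      qed
    qed
  qed
qed



definition phi :: "('v \<Rightarrow> 'v list) \<Rightarrow> 'v \<times> 'v \<Rightarrow> 'v \<times> 'v" where
  "phi rot z = (succ (rot (fst z)) (snd z), fst z)"

definition ald :: "('v \<Rightarrow> 'v list) \<Rightarrow> ('v \<times> 'v) set" where
  "ald rot = {z. snd z \<in> set (rot (fst z))}"

definition orb :: "('v \<Rightarrow> 'v list) \<Rightarrow> 'v \<times> 'v \<Rightarrow> ('v \<times> 'v) set" where
  "orb rot z = range (\<lambda>n. (phi rot ^^ n) z)"

definition gwf :: "('v \<Rightarrow> 'v list) \<Rightarrow> bool" where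
  "gwf rot \<longleftrightarrow> (\<forall>v. distinct (rot v)) \<and> (\<forall>v w. w \<in> set (rot v) \<longrightarrow> v \<in> set (rot w))
     \<and> finite (ald rot)"

lemma succ_in: "a \<in> set r \<Longrightarrow> succ r a \<in> set r"
  unfolding succ_def by (metis length_pos_if_in_set mod_less_divisor nth_mem)

lemma mod_Suc_inj: "(x::nat) < d \<Longrightarrow> y < d \<Longrightarrow> Suc x mod d = Suc y mod d \<Longrightarrow> x = y"
  by (auto simp: mod_Suc split: if_splits)

lemma succ_inj: "distinct r \<Longrightarrow> a \<in> set r \<Longrightarrow> b \<in> set r \<Longrightarrow> succ r a = succ r b \<Longrightarrow> a = b"
proof -
  assume "distinct r" "a \<in> set r" "b \<in> set r" "succ r a = succ r b"
  moreover have "0 < length r" using \<open>a \<in> set r\<close> by (metis length_pos_if_in_set)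
  ultimately have "Suc (idx r a) mod length r = Suc (idx r b) mod length r"
    unfolding succ_def by (simp add: nth_eq_iff_index_eq)
  then have "idx r a = idx r b" using mod_Suc_inj idx_less \<open>a \<in> set r\<close> \<open>b \<in> set r\<close> by metis
  then show "a = b" using nth_idx \<open>a \<in> set r\<close> \<open>b \<in> set r\<close> by metis
qed

lemma phi_in: "gwf rot \<Longrightarrow> z \<in> ald rot \<Longrightarrow> phi rot z \<in> ald rot"
proof -
  assume g: "gwf rot" and z: "z \<in> ald rot"
  obtain v a where va: "z = (v, a)" by (cases z)
  have a: "a \<in> set (rot v)" using z va unfolding ald_def by simp
  define s where "s = succ (rot v) a"
  have "s \<in> set (rot v)" using succ_in a unfolding s_def by metis
  then have "v \<in> set (rot s)" using g unfolding gwf_def by blast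
  then show ?thesis unfolding va phi_def ald_def s_def by simp
qed

lemma phi_inj: "gwf rot \<Longrightarrow> inj_on (phi rot) (ald rot)"
proof (rule inj_onI)
  fix z1 z2 assume g: "gwf rot" and z: "z1 \<in> ald rot" "z2 \<in> ald rot" "phi rot z1 = phi rot z2"
  obtain v1 a1 where 1: "z1 = (v1, a1)" by (cases z1)
  obtain v2 a2 where 2: "z2 = (v2, a2)" by (cases z2)
  have f: "v1 = v2" using z(3) 1 2 unfolding phi_def by simp
  have e: "succ (rot v1) a1 = succ (rot v1) a2" using z(3) 1 2 f unfolding phi_def by simp
  have d: "distinct (rot v1)" using g unfolding gwf_def by blast
  have "a1 \<in> set (rot v1)" "a2 \<in> set (rot v1)" using z 1 2 f unfolding ald_def by auto
  then have "a1 = a2" using succ_inj[OF d _ _ e] by blast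
  then show "z1 = z2" using 1 2 f by simp
qed

lemma funpow_in: "gwf rot \<Longrightarrow> z \<in> ald rot \<Longrightarrow> (phi rot ^^ n) z \<in> ald rot"
  by (induction n) (auto intro: phi_in)

lemma funpow_cancel: "gwf rot \<Longrightarrow> z1 \<in> ald rot \<Longrightarrow> z2 \<in> ald rot \<Longrightarrow>
   (phi rot ^^ n) z1 = (phi rot ^^ n) z2 \<Longrightarrow> z1 = z2"
proof (induction n arbitrary: z1 z2)
  case 0 then show ?case by simp
next
  case (Suc n)
  have i1: "phi rot z1 \<in> ald rot" "phi rot z2 \<in> ald rot" using phi_in Suc.prems by metis+
  have "(phi rot ^^ n) (phi rot z1) = (phi rot ^^ n) (phi rot z2)"
    using Suc.prems(4) by (simp add: funpow_Suc_right del: funpow.simps)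
  then have "phi rot z1 = phi rot z2" using Suc.IH[OF Suc.prems(1) i1] by blast
  then show ?case using phi_inj[OF Suc.prems(1)] Suc.prems(2,3) by (meson inj_onD)
qed

lemma periodic: assumes g: "gwf rot" and z: "z \<in> ald rot" shows "\<exists>P>0. (phi rot ^^ P) z = z"
proof -
  have "range (\<lambda>n. (phi rot ^^ n) z) \<subseteq> ald rot" using funpow_in[OF g z] by auto
  then have "finite (range (\<lambda>n. (phi rot ^^ n) z))" using g gwf_def finite_subset by metis
  then have "\<not> inj (\<lambda>n. (phi rot ^^ n) z)" using finite_imageD infinite_UNIV_nat by blast
  then obtain a b where ab: "a \<noteq> b" "(phi rot ^^ a) z = (phi rot ^^ b) z" unfolding inj_def by blast
  have main: "a < b \<Longrightarrow> (phi rot ^^ a) z = (phi rot ^^ b) z \<Longrightarrow> \<exists>P>0. (phi rot ^^ P) z = z" for a b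
  proof -
    assume "a < b" "(phi rot ^^ a) z = (phi rot ^^ b) z"
    then have "(phi rot ^^ a) z = (phi rot ^^ a) ((phi rot ^^ (b - a)) z)"
      by (metis funpow_add le_add_diff_inverse less_imp_le o_apply)
    then have "z = (phi rot ^^ (b - a)) z" using funpow_cancel[OF g z funpow_in[OF g z]] by blast
    then show ?thesis using \<open>a < b\<close> by (metis zero_less_diff)
  qed
  show ?thesis using ab main[of a b] main[of b a] by (metis linorder_neqE_nat)
qed

lemma funpow_mult_period: "(f ^^ P) z = z \<Longrightarrow> (f ^^ (P * n)) z = z"
  by (induction n) (auto simp: funpow_add)

lemma orb_sub: "z' \<in> orb rot z \<Longrightarrow> orb rot z' \<subseteq> orb rot z"
  unfolding orb_def by (auto simp: funpow_add[symmetric, THEN fun_cong, simplified])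

lemma orb_self: "z \<in> orb rot z"
  unfolding orb_def by (metis funpow_0 rangeI)

lemma orb_sym: assumes g: "gwf rot" and z: "z \<in> ald rot" and z': "z' \<in> orb rot z"
  shows "orb rot z' = orb rot z"
proof
  show "orb rot z' \<subseteq> orb rot z" using orb_sub z' .
  obtain n where n: "z' = (phi rot ^^ n) z" using z' unfolding orb_def by auto
  obtain P where P: "P > 0" "(phi rot ^^ P) z = z" using periodic[OF g z] by blast
  have "(phi rot ^^ (P * n - n)) z' = (phi rot ^^ (P * n - n + n)) z" using n by (simp add: funpow_add)
  also have "P * n - n + n = P * n" using P by simp
  finally have "z \<in> orb rot z'" using funpow_mult_period[OF P(2)] unfolding orb_def by (metis rangeI)
  then show "orb rot z \<subseteq> orb rot z'" using orb_sub by blast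
qed

lemma orb_ald: "gwf rot \<Longrightarrow> z \<in> ald rot \<Longrightarrow> orb rot z \<subseteq> ald rot"
  unfolding orb_def using funpow_in by blast



definition orbit :: "('a \<Rightarrow> 'a) \<Rightarrow> 'a \<Rightarrow> 'a set" where
  "orbit f z = range (\<lambda>n. (f ^^ n) z)"

lemma orb_orbit: "orb rot = orbit (phi rot)"
  unfolding orb_def orbit_def by (rule ext) simp

lemma orbit_self: "z \<in> orbit f z"
  unfolding orbit_def by (metis funpow_0 rangeI)

lemma orbit_step: "f z \<in> orbit f z"
proof -
  have "(f ^^ Suc 0) z = f z" by simp
  then show ?thesis unfolding orbit_def by (metis rangeI)
qed

lemma orbit_sub: "z' \<in> orbit f z \<Longrightarrow> orbit f z' \<subseteq> orbit f z"
  unfolding orbit_def by (auto simp: funpow_add[symmetric, THEN fun_cong, simplified])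

lemma orbit_closed: "f ` S \<subseteq> S \<Longrightarrow> z \<in> S \<Longrightarrow> orbit f z \<subseteq> S"
proof -
  assume a: "f ` S \<subseteq> S" "z \<in> S"
  have "(f ^^ n) z \<in> S" for n using a by (induction n) auto
  then show ?thesis unfolding orbit_def by auto
qed

lemma R_lemma:
  assumes DE: "E \<subseteq> D" and ND: "N \<inter> D = {}"
    and fD: "f ` D \<subseteq> D"
    and sym: "\<And>z u. z \<in> D \<Longrightarrow> u \<in> orbit f z \<Longrightarrow> orbit f u = orbit f z"
    and gf: "\<And>u. u \<in> D \<Longrightarrow> u \<notin> E \<Longrightarrow> g u = f u"
    and gE: "\<And>u. u \<in> E \<Longrightarrow> g u \<in> N"
    and gN: "\<And>u. u \<in> N \<Longrightarrow> g u \<in> N \<or> g u \<in> f ` E"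
    and Eorb: "\<And>e1 e2. e1 \<in> E \<Longrightarrow> e2 \<in> E \<Longrightarrow> e2 \<in> orbit f e1"
    and z: "z \<in> D"
  shows "orbit g z \<inter> D \<subseteq> orbit f z"
proof -
  have oD: "orbit f z \<subseteq> D" using orbit_closed[OF fD z] .
  have inv: "(g ^^ n) z \<in> orbit f z \<or> ((g ^^ n) z \<in> N \<and> (\<exists>e\<in>E. e \<in> orbit f z))" for n
  proof (induction n)
    case 0 then show ?case using orbit_self[of z f] by simp
  next
    case (Suc n)
    define u where "u = (g ^^ n) z"
    have gu: "(g ^^ Suc n) z = g u" unfolding u_def by simp
    show ?case
    proof (cases "u \<in> orbit f z")
      case True
      then have uD: "u \<in> D" using oD by blast
      show ?thesis
      proof (cases "u \<in> E")
        case True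
        have "g u \<in> N" using gE True by blast
        then show ?thesis using gu True \<open>u \<in> orbit f z\<close> by (metis (no_types))
      next
        case False
        then have "g u = f u" using gf uD by simp
        moreover have "f u \<in> orbit f z" using orbit_sub[OF \<open>u \<in> orbit f z\<close>] orbit_step[of f u] by blast
        ultimately show ?thesis using gu by simp
      qed
    next
      case False
      then obtain e where e: "u \<in> N" "e \<in> E" "e \<in> orbit f z" using Suc.IH u_def by blast
      from gN[OF e(1)] show ?thesis
      proof
        assume "g u \<in> N" then show ?thesis using e gu by (metis (no_types))
      next
        assume "g u \<in> f ` E"
        then obtain e' where e': "e' \<in> E" "g u = f e'" by blast
        have "e' \<in> orbit f e" using Eorb e e' by blast
        then have "e' \<in> orbit f z" using orbit_sub[OF e(3)] by blast
        then have "f e' \<in> orbit f z" using orbit_sub[OF \<open>e' \<in> orbit f z\<close>] orbit_step[of f e'] by blast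
        then show ?thesis using e' gu by simp
      qed
    qed
  qed
  show ?thesis
  proof
    fix w assume "w \<in> orbit g z \<inter> D"
    then obtain n where "w = (g ^^ n) z" "w \<in> D" unfolding orbit_def by auto
    then show "w \<in> orbit f z" using inv[of n] ND by blast
  qed
qed

definition HH :: "('a \<Rightarrow> 'a set) \<Rightarrow> 'a set \<Rightarrow> 'a set \<Rightarrow> 'a set" where
  "HH Ob D S = \<Union> (Ob ` (S \<inter> D))"

lemma HH_F:
  assumes "S \<inter> D \<subseteq> F" "wz \<in> S \<inter> D" "\<And>w. w \<in> F \<Longrightarrow> Ob w = F"
  shows "HH Ob D S = F"
  unfolding HH_def using assms by auto

lemma card_le_image: "finite B \<Longrightarrow> A \<subseteq> H ` B \<Longrightarrow> card A \<le> card B"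
  by (meson card_image_le card_mono finite_imageI le_trans)

lemma card_lt_image:
  assumes "finite B" "A \<subseteq> H ` B" "b1 \<in> B" "b2 \<in> B" "b1 \<noteq> b2" "H b1 = H b2"
  shows "card A < card B"
proof -
  have "\<not> inj_on H B" using assms(3-6) unfolding inj_on_def by blast
  then have "card (H ` B) \<noteq> card B" using eq_card_imp_inj_on[OF assms(1)] by blast
  then have "card (H ` B) < card B" using card_image_le[OF assms(1), of H] by linarith
  moreover have "card A \<le> card (H ` B)" using assms(1,2) by (simp add: card_mono)
  ultimately show ?thesis by simp
qed



definition darts :: "('v \<Rightarrow> 'v list) \<Rightarrow> 'v \<Rightarrow> ('v \<times> 'v) set" where
  "darts rot v = Pair v ` set (rot v)"

definition fc :: "('v \<Rightarrow> 'v list) \<Rightarrow> 'v \<Rightarrow> nat" where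
  "fc rot v = card (orb rot ` darts rot v)"

definition dc :: "('v \<Rightarrow> 'v list) \<Rightarrow> 'v \<times> nat \<Rightarrow> 'v \<times> 'v" where
  "dc rot c = (fst c, rot (fst c) ! snd c)"

lemma darts_ald: "darts rot v \<subseteq> ald rot"
  unfolding darts_def ald_def by auto

lemma fc_le_deg: "fc rot v \<le> length (rot v)"
proof -
  have "fc rot v \<le> card (darts rot v)" unfolding fc_def darts_def by (simp add: card_image_le)
  also have "\<dots> \<le> card (set (rot v))" unfolding darts_def by (simp add: card_image_le)
  also have "\<dots> \<le> length (rot v)" by (rule card_length)
  finally show ?thesis .
qed

lemma fc_pos: "rot v \<noteq> [] \<Longrightarrow> 0 < fc rot v"
  unfolding fc_def darts_def by (simp add: card_gt_0_iff)

lemma circ_gwf: assumes "circ_valid rot C" shows "gwf rot"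
proof -
  have n: "\<And>v. v \<notin> set C \<Longrightarrow> rot v = []" using assms unfolding circ_valid_def by blast
  have "\<forall>v. distinct (rot v)" using assms n unfolding circ_valid_def by (metis distinct.simps(1))
  moreover have "\<forall>v w. w \<in> set (rot v) \<longrightarrow> v \<in> set (rot w)"
    using assms n unfolding circ_valid_def by (metis empty_iff list.set(1))
  moreover have "ald rot \<subseteq> set C \<times> set C"
  proof
    fix z assume z: "z \<in> ald rot"
    then have "rot (fst z) \<noteq> []" unfolding ald_def by auto
    then have "fst z \<in> set C" using n by blast
    then have "set (rot (fst z)) \<subseteq> set C" using assms unfolding circ_valid_def by blast
    then show "z \<in> set C \<times> set C" using z \<open>fst z \<in> set C\<close> unfolding ald_def by (auto simp: mem_Times_iff)
  qed
  then have "finite (ald rot)" by (meson finite_SigmaI finite_set finite_subset)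
  ultimately show ?thesis unfolding gwf_def by blast
qed

lemma nxt_dc:
  assumes g: "gwf rot" and c: "snd c < length (rot (fst c))"
  shows "snd (nxt rot c) < length (rot (fst (nxt rot c)))" "dc rot (nxt rot c) = phi rot (dc rot c)"
proof -
  obtain v i where vi: "c = (v, i)" by (cases c)
  define b where "b = rot v ! (Suc i mod length (rot v))"
  have il: "i < length (rot v)" using c vi by simp
  have "Suc i mod length (rot v) < length (rot v)" using il mod_less_divisor[of "length (rot v)" "Suc i"] by linarith
  then have bin: "b \<in> set (rot v)" unfolding b_def by (rule nth_mem)
  have vin: "v \<in> set (rot b)" using g bin unfolding gwf_def by blast
  have nx: "nxt rot c = (b, idx (rot b) v)" unfolding nxt_def vi b_def Let_def by simp
  show "snd (nxt rot c) < length (rot (fst (nxt rot c)))" using nx idx_less vin by simp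
  have "idx (rot v) (rot v ! i) = i" using idx_nth g il unfolding gwf_def by blast
  then have "phi rot (dc rot c) = (b, v)" unfolding phi_def dc_def vi succ_def b_def by simp
  moreover have "dc rot (nxt rot c) = (b, v)" using nx nth_idx vin unfolding dc_def by simp
  ultimately show "dc rot (nxt rot c) = phi rot (dc rot c)" by simp
qed

lemma walk_dc:
  assumes g: "gwf rot" and c: "snd c < length (rot (fst c))"
  shows "snd ((nxt rot ^^ n) c) < length (rot (fst ((nxt rot ^^ n) c))) \<and>
         dc rot ((nxt rot ^^ n) c) = (phi rot ^^ n) (dc rot c)"
  by (induction n) (use c nxt_dc[OF g] in auto)

lemma dc_inj:
  assumes g: "gwf rot" and "snd c < length (rot (fst c))" "snd c' < length (rot (fst c'))"
    and "dc rot c = dc rot c'"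
  shows "c = c'"
proof -
  have "fst c = fst c'" using assms(4) unfolding dc_def by simp
  moreover have "distinct (rot (fst c))" using g unfolding gwf_def by blast
  ultimately show ?thesis using assms unfolding dc_def by (simp add: nth_eq_iff_index_eq prod_eq_iff)
qed

lemma dc_darts: "snd c < length (rot (fst c)) \<Longrightarrow> dc rot c \<in> darts rot (fst c)"
  unfolding dc_def darts_def by simp

lemma vert_mono:
  assumes g: "gwf rot" and sub: "set (rot v) \<subseteq> set (rot' v)"
    and R0: "\<forall>z \<in> ald rot. orb rot' z \<inter> ald rot \<subseteq> orb rot z"
  shows "fc rot v \<le> fc rot' v"
    and "z1 \<in> darts rot' v \<Longrightarrow> z2 \<in> darts rot' v \<Longrightarrow> orb rot' z1 \<noteq> orb rot' z2 \<Longrightarrow>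
         HH (orb rot) (ald rot) (orb rot' z1) = HH (orb rot) (ald rot) (orb rot' z2) \<Longrightarrow>
         fc rot v < fc rot' v"
proof -
  have R: "z \<in> ald rot \<Longrightarrow> orb rot' z \<inter> ald rot \<subseteq> orb rot z" for z using R0 by blast
  let ?H = "HH (orb rot) (ald rot)"
  have fin: "finite (orb rot' ` darts rot' v)" unfolding darts_def by simp
  have "orb rot ` darts rot v \<subseteq> ?H ` orb rot' ` darts rot' v"
  proof
    fix A assume "A \<in> orb rot ` darts rot v"
    then obtain z where z: "z \<in> darts rot v" "A = orb rot z" by blast
    have zD: "z \<in> ald rot" by (rule subsetD[OF darts_ald z(1)])
    have z': "z \<in> darts rot' v" using z sub unfolding darts_def by auto
    have "?H (orb rot' z) = orb rot z"
    proof (rule HH_F)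
      show "orb rot' z \<inter> ald rot \<subseteq> orb rot z" using R zD .
      show "z \<in> orb rot' z \<inter> ald rot" using zD orb_self by blast
      show "\<And>w. w \<in> orb rot z \<Longrightarrow> orb rot w = orb rot z" using orb_sym g zD by blast
    qed
    then show "A \<in> ?H ` orb rot' ` darts rot' v" using z z' by force
  qed
  note sub2 = this
  show "fc rot v \<le> fc rot' v" unfolding fc_def using card_le_image[OF fin sub2] .
  assume "z1 \<in> darts rot' v" "z2 \<in> darts rot' v" "orb rot' z1 \<noteq> orb rot' z2"
    "?H (orb rot' z1) = ?H (orb rot' z2)"
  then show "fc rot v < fc rot' v" unfolding fc_def
    using card_lt_image[OF fin sub2, of "orb rot' z1" "orb rot' z2"] by blast
qed



lemma es_unfold:
  assumes "enclosed_side rot C (p,q,i,j) X"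
  shows "\<exists>m k. 0 < m \<and> m < k \<and> (nxt rot ^^ m) (ins_corner rot p i) = ins_corner rot q j \<and>
     (nxt rot ^^ k) (ins_corner rot p i) = ins_corner rot p i \<and>
     (\<forall>n. 0 < n \<and> n < k \<longrightarrow> (nxt rot ^^ n) (ins_corner rot p i) \<noteq> ins_corner rot p i) \<and>
     ((\<exists>v l. is_outc rot C v l \<and> (v, l) \<in> (\<lambda>n. (nxt rot ^^ n) (ins_corner rot p i)) ` {0..<k}) \<longrightarrow>
       ((X = (\<lambda>n. (nxt rot ^^ n) (ins_corner rot p i)) ` {0<..<m} \<and>
         fst ` (\<lambda>n. (nxt rot ^^ n) (ins_corner rot p i)) ` {m<..<k} \<union> {p, q} = set C) \<or>
        (X = (\<lambda>n. (nxt rot ^^ n) (ins_corner rot p i)) ` {m<..<k} \<and>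
         fst ` (\<lambda>n. (nxt rot ^^ n) (ins_corner rot p i)) ` {0<..<m} \<union> {p, q} = set C))) \<and>
     (X = (\<lambda>n. (nxt rot ^^ n) (ins_corner rot p i)) ` {0<..<m} \<or>
      X = (\<lambda>n. (nxt rot ^^ n) (ins_corner rot p i)) ` {m<..<k})"
  using assms unfolding enclosed_side_def Let_def by simp blast



lemma move_step:
  assumes cv: "circ_valid rot C" and pC: "p \<in> set C" and qC: "q \<in> set C" and pq: "p \<noteq> q"
    and pne: "rot p \<noteq> []" and qne: "rot q \<noteq> []" and qnp: "q \<notin> set (rot p)"
    and il: "i \<le> length (rot p)" and jl: "j \<le> length (rot q)"
    and es: "enclosed_side rot C (p,q,i,j) X"
  shows "fc rot v \<le> fc (upd rot (p,q,i,j)) v"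
    and "v \<in> moved rot C X \<Longrightarrow> fc rot v < fc (upd rot (p,q,i,j)) v"
proof -
  have g: "gwf rot" using circ_gwf[OF cv] .
  define rot' where "rot' = upd rot (p,q,i,j)"
  have r'p: "rot' p = ins i q (rot p)" and r'q: "rot' q = ins j p (rot q)"
    and r'u: "\<And>u. u \<noteq> p \<Longrightarrow> u \<noteq> q \<Longrightarrow> rot' u = rot u"
    unfolding rot'_def using pq by auto
  have pnq: "p \<notin> set (rot q)" using qnp g unfolding gwf_def by blast
  have dp: "distinct (rot p)" "distinct (rot q)" using g unfolding gwf_def by auto
  define cp where "cp = ins_corner rot p i"
  define cq where "cq = ins_corner rot q j"
  define a where "a = rot p ! ((i + length (rot p) - 1) mod length (rot p))"
  define b where "b = rot q ! ((j + length (rot q) - 1) mod length (rot q))"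
  have cpv: "snd cp < length (rot (fst cp))" using pne unfolding cp_def ins_corner_def by simp
  have cqv: "snd cq < length (rot (fst cq))" using qne unfolding cq_def ins_corner_def by simp
  define x where "x = dc rot cp"
  define y where "y = dc rot cq"
  have xa: "x = (p, a)" unfolding x_def dc_def cp_def ins_corner_def a_def by simp
  have yb: "y = (q, b)" unfolding y_def dc_def cq_def ins_corner_def b_def by simp
  have ain: "a \<in> set (rot p)" using cpv unfolding a_def cp_def ins_corner_def by simp
  have bin: "b \<in> set (rot q)" using cqv unfolding b_def cq_def ins_corner_def by simp
  define w where "w = (\<lambda>n. (nxt rot ^^ n) cp)"
  have W: "snd (w n) < length (rot (fst (w n))) \<and> dc rot (w n) = (phi rot ^^ n) x" for n
    unfolding w_def x_def using walk_dc[OF g cpv] .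
  obtain m k where mk: "0 < m" "m < k" "w m = cq" "w k = cp"
    and ret: "\<And>n. 0 < n \<Longrightarrow> n < k \<Longrightarrow> w n \<noteq> cp"
    and side: "(\<exists>v l. is_outc rot C v l \<and> (v, l) \<in> w ` {0..<k}) \<longrightarrow>
       ((X = w ` {0<..<m} \<and> fst ` w ` {m<..<k} \<union> {p, q} = set C) \<or>
        (X = w ` {m<..<k} \<and> fst ` w ` {0<..<m} \<union> {p, q} = set C))"
    and Xs: "X = w ` {0<..<m} \<or> X = w ` {m<..<k}"
    using es_unfold[OF es] unfolding w_def cp_def cq_def by blast
  let ?f = "phi rot" and ?g = "phi rot'"
  let ?D = "ald rot"
  have xD: "x \<in> ?D" unfolding xa ald_def using ain by simp
  have PD: "(?f ^^ n) x \<in> ?D" for n using funpow_in[OF g xD] .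
  have Fm: "(?f ^^ m) x = y" using W[of m] mk unfolding y_def by simp
  have Fk: "(?f ^^ k) x = x" using W[of k] mk unfolding x_def by simp
  have Fret: "0 < n \<Longrightarrow> n < k \<Longrightarrow> (?f ^^ n) x \<noteq> x" for n
    using W[of n] ret[of n] dc_inj[OF g _ cpv] unfolding x_def by metis
  have dist: "i' < n \<Longrightarrow> n < k \<Longrightarrow> (?f ^^ i') x \<noteq> (?f ^^ n) x" for i' n
  proof
    assume a1: "i' < n" "n < k" "(?f ^^ i') x = (?f ^^ n) x"
    then have "(?f ^^ i') x = (?f ^^ i') ((?f ^^ (n - i')) x)"
      by (metis funpow_add le_add_diff_inverse less_imp_le o_apply)
    then have "x = (?f ^^ (n - i')) x" using funpow_cancel[OF g xD PD] by blast
    moreover have "0 < n - i'" "n - i' < k" using a1 by auto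
    ultimately show False using Fret[of "n - i'"] by simp
  qed
  have yD: "y \<in> ?D" using Fm PD by metis
  have pqD: "(p,q) \<notin> ?D" "(q,p) \<notin> ?D" using qnp pnq unfolding ald_def by auto
  have N1: "z \<in> ?D \<Longrightarrow> z \<noteq> x \<Longrightarrow> z \<noteq> y \<Longrightarrow> ?g z = ?f z" for z
  proof -
    assume z: "z \<in> ?D" "z \<noteq> x" "z \<noteq> y"
    obtain u c where uc: "z = (u, c)" by (cases z)
    have cin: "c \<in> set (rot u)" using z uc unfolding ald_def by simp
    show ?thesis
    proof (cases "u = p")
      case True
      then have "c \<noteq> a" using z uc xa by auto
      then show ?thesis using succ_ins(1)[OF dp(1) qnp pne il a_def, of c] cin True uc r'p
        unfolding phi_def by simp
    next
      case False
      show ?thesis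
      proof (cases "u = q")
        case True
        then have "c \<noteq> b" using z uc yb by auto
        then show ?thesis using succ_ins(1)[OF dp(2) pnq qne jl b_def, of c] cin True uc r'q
          unfolding phi_def by simp
      qed (use False r'u uc in \<open>simp add: phi_def\<close>)
    qed
  qed
  have N2: "?g x = (q, p)" "?g y = (p, q)" "?g (p, q) = ?f x" "?g (q, p) = ?f y"
    using succ_ins[OF dp(1) qnp pne il a_def] succ_ins[OF dp(2) pnq qne jl b_def] ain bin r'p r'q
    unfolding phi_def xa yb by auto
  have symO: "z \<in> ?D \<Longrightarrow> u \<in> orbit ?f z \<Longrightarrow> orbit ?f u = orbit ?f z" for z u
    using orb_sym[OF g] unfolding orb_orbit by blast
  have yox: "y \<in> orbit ?f x" using Fm unfolding orbit_def by (metis rangeI)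
  have xoy: "x \<in> orbit ?f y" using symO[OF xD yox] orbit_self by metis
  have Rg: "orbit ?g z \<inter> ?D \<subseteq> orbit ?f z" if "z \<in> ?D" for z
  proof (rule R_lemma[where E = "{x, y}" and N = "{(p,q), (q,p)}"])
    show "{x, y} \<subseteq> ?D" using xD yD by simp
    show "{(p, q), (q, p)} \<inter> ?D = {}" using pqD by simp
    show "?f ` ?D \<subseteq> ?D" using phi_in[OF g] by blast
    show "\<And>z u. z \<in> ?D \<Longrightarrow> u \<in> orbit ?f z \<Longrightarrow> orbit ?f u = orbit ?f z" using symO by blast
    show "\<And>u. u \<in> ?D \<Longrightarrow> u \<notin> {x, y} \<Longrightarrow> ?g u = ?f u" using N1 by blast
    show "\<And>u. u \<in> {x, y} \<Longrightarrow> ?g u \<in> {(p,q), (q,p)}" using N2 by blast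
    show "\<And>u. u \<in> {(p,q), (q,p)} \<Longrightarrow> ?g u \<in> {(p,q), (q,p)} \<or> ?g u \<in> ?f ` {x, y}"
      using N2 by blast
    show "\<And>e1 e2. e1 \<in> {x, y} \<Longrightarrow> e2 \<in> {x, y} \<Longrightarrow> e2 \<in> orbit ?f e1"
      using yox xoy orbit_self[of x ?f] orbit_self[of y ?f] by blast
    show "z \<in> ?D" by (rule that)
  qed
  have R: "z \<in> ?D \<Longrightarrow> orb rot' z \<inter> ?D \<subseteq> orb rot z" for z using Rg unfolding orb_orbit by blast
  have subv: "set (rot u) \<subseteq> set (rot' u)" for u
    using r'p r'q r'u pq by (cases "u = p"; cases "u = q") (auto simp: ins_set)
  have R0: "\<forall>z \<in> ?D. orb rot' z \<inter> ?D \<subseteq> orb rot z" using R by blast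
  note VM = vert_mono[OF g subv[of v] R0]
  show "fc rot v \<le> fc (upd rot (p,q,i,j)) v" using VM(1) unfolding rot'_def .
  define B where "B = (\<lambda>n. (?f ^^ n) x) ` {0<..m} \<union> {(p,q)}"
  have Bcl: "?g ` B \<subseteq> B"
  proof
    fix z assume "z \<in> ?g ` B"
    then obtain u where u: "u \<in> B" "z = ?g u" by blast
    show "z \<in> B"
    proof (cases "u = (p,q)")
      case True
      then have "z = (?f ^^ 1) x" using u N2 by simp
      then show ?thesis unfolding B_def using mk by (intro UnI1 image_eqI[of _ _ 1]) auto
    next
      case False
      then obtain n where n: "n \<in> {0<..m}" "u = (?f ^^ n) x" using u unfolding B_def by blast
      show ?thesis
      proof (cases "n = m")
        case True then show ?thesis using u n Fm N2 unfolding B_def by simp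
      next
        case False
        then have "u \<noteq> x" "u \<noteq> y" using n Fret[of n] dist[of n m] Fm mk by auto
        then have "z = (?f ^^ Suc n) x" using u n N1 PD by simp
        then show ?thesis unfolding B_def using n False by (intro UnI1 image_eqI[of _ _ "Suc n"]) auto
      qed
    qed
  qed
  have oB: "z \<in> B \<Longrightarrow> orb rot' z \<subseteq> B" for z using orbit_closed[OF Bcl] unfolding orb_orbit by blast
  have BD: "B \<inter> ?D \<subseteq> orb rot x" using pqD unfolding B_def orb_def by auto
  define F where "F = orb rot x"
  have FH: "w' \<in> F \<Longrightarrow> orb rot w' = F" for w' using orb_sym[OF g xD] unfolding F_def by blast
  let ?H = "HH (orb rot) ?D"
  have Hold: "z \<in> ?D \<Longrightarrow> z \<in> F \<Longrightarrow> ?H (orb rot' z) = F" for z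
    using HH_F[OF R, of z z] orb_self FH by (metis IntI)
  have Hpq: "?H (orb rot' (p,q)) = F"
  proof (rule HH_F[where wz = "?f x"])
    have "(p,q) \<in> B" by (simp add: B_def)
    show "orb rot' (p, q) \<inter> ?D \<subseteq> F" using oB[OF \<open>(p,q) \<in> B\<close>] BD unfolding F_def by blast
    show "?f x \<in> orb rot' (p, q) \<inter> ?D" using orbit_step[of ?g "(p,q)"] N2 phi_in[OF g xD]
      unfolding orb_orbit by simp
  qed (use FH in blast)
  have Hqp: "?H (orb rot' (q,p)) = F"
  proof (rule HH_F[where wz = "?f y"])
    have "(q,p) \<in> orb rot' x" using orbit_step[of ?g x] N2 unfolding orb_orbit by simp
    then have "orb rot' (q,p) \<subseteq> orb rot' x" using orbit_sub unfolding orb_orbit by metis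
    then show "orb rot' (q, p) \<inter> ?D \<subseteq> F" using R[OF xD] unfolding F_def by blast
    show "?f y \<in> orb rot' (q, p) \<inter> ?D" using orbit_step[of ?g "(q,p)"] N2 phi_in[OF g yD]
      unfolding orb_orbit by simp
  qed (use FH in blast)
  have xF: "x \<in> F" and yF: "y \<in> F" unfolding F_def using orb_self yox orb_orbit by metis+
  have PF: "(?f ^^ n) x \<in> F" for n unfolding F_def orb_def by simp
  have xnB: "x \<notin> B"
  proof
    assume "x \<in> B"
    moreover have "x \<noteq> (p,q)" using xD pqD by blast
    ultimately obtain n where "n \<in> {0<..m}" "x = (?f ^^ n) x" unfolding B_def by blast
    then show False using Fret[of n] mk by simp
  qed
  have yB: "y \<in> B" unfolding B_def using Fm mk by (intro UnI1 image_eqI[of _ _ m]) auto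
  have PDn: "(?f ^^ n) x \<noteq> (q,p)" "(?f ^^ n) x \<noteq> (p,q)" for n using PD[of n] pqD by metis+
  have "(q,p) \<notin> range (\<lambda>n. (?f ^^ n) x)" using PDn(1) by (metis (no_types) imageE)
  then have qpnB: "(q,p) \<notin> B" using pq unfolding B_def by blast
  have AnB: "m < n \<Longrightarrow> n < k \<Longrightarrow> (?f ^^ n) x \<notin> B" for n
  proof
    assume a1: "m < n" "n < k" "(?f ^^ n) x \<in> B"
    then obtain n' where "n' \<in> {0<..m}" "(?f ^^ n) x = (?f ^^ n') x" using PDn[of n] unfolding B_def by blast
    then show False using dist[of n' n] a1 by simp
  qed
  have sep: "z1 \<in> B \<Longrightarrow> z2 \<notin> B \<Longrightarrow> orb rot' z1 \<noteq> orb rot' z2" for z1 z2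
    using oB[of z1] orb_self[of z2 rot'] by blast
  have strict: "z1 \<in> darts rot' v \<Longrightarrow> z2 \<in> darts rot' v \<Longrightarrow> z1 \<in> B \<Longrightarrow> z2 \<notin> B \<Longrightarrow>
     ?H (orb rot' z1) = F \<Longrightarrow> ?H (orb rot' z2) = F \<Longrightarrow> fc rot v < fc (upd rot (p,q,i,j)) v" for z1 z2
  proof -
    assume a1: "z1 \<in> darts rot' v" "z2 \<in> darts rot' v" "z1 \<in> B" "z2 \<notin> B"
      "?H (orb rot' z1) = F" "?H (orb rot' z2) = F"
    have "orb rot' z1 \<noteq> orb rot' z2" using sep a1(3,4) by blast
    from VM(2)[OF a1(1,2) this] a1(5,6) show ?thesis unfolding rot'_def by simp
  qed
  assume mv: "v \<in> moved rot C X"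
  show "fc rot v < fc (upd rot (p,q,i,j)) v"
  proof (cases "v = p")
    case True
    have "(p,q) \<in> darts rot' p" "x \<in> darts rot' p" unfolding darts_def r'p xa
      using ain by (auto simp: ins_set)
    then show ?thesis using strict[of "(p,q)" x] True B_def xnB Hpq Hold[OF xD xF] by simp
  next
    case vp: False
    show ?thesis
    proof (cases "v = q")
      case True
      have "y \<in> darts rot' q" "(q,p) \<in> darts rot' q" unfolding darts_def r'q yb
        using bin by (auto simp: ins_set)
      then show ?thesis using strict[of y "(q,p)"] True yB qpnB Hqp Hold[OF yD yF] by simp
    next
      case vq: False
      obtain l where l: "is_outc rot C v l" "(v,l) \<in> X" "v \<in> set C"
        using mv unfolding moved_def by blast
      have "(v,l) \<in> w ` {0..<k}" using Xs l(2) mk by auto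
      then have sd: "(X = w ` {0<..<m} \<and> fst ` w ` {m<..<k} \<union> {p, q} = set C) \<or>
        (X = w ` {m<..<k} \<and> fst ` w ` {0<..<m} \<union> {p, q} = set C)" using side l(1) by blast
      have "\<exists>n1 n2. n1 \<in> {0<..<m} \<and> n2 \<in> {m<..<k} \<and> fst (w n1) = v \<and> fst (w n2) = v"
      proof -
        from sd show ?thesis
        proof
          assume h: "X = w ` {0<..<m} \<and> fst ` w ` {m<..<k} \<union> {p, q} = set C"
          then obtain n1 where "n1 \<in> {0<..<m}" "w n1 = (v,l)" using l(2) by auto
          moreover obtain n2 where "n2 \<in> {m<..<k}" "fst (w n2) = v" using h l(3) vp vq by auto
          ultimately show ?thesis by force
        next
          assume h: "X = w ` {m<..<k} \<and> fst ` w ` {0<..<m} \<union> {p, q} = set C"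
          then obtain n2 where "n2 \<in> {m<..<k}" "w n2 = (v,l)" using l(2) by auto
          moreover obtain n1 where "n1 \<in> {0<..<m}" "fst (w n1) = v" using h l(3) vp vq by auto
          ultimately show ?thesis by force
        qed
      qed
      then obtain n1 n2 where n12: "n1 \<in> {0<..<m}" "n2 \<in> {m<..<k}" "fst (w n1) = v" "fst (w n2) = v"
        by blast
      have d1: "(?f ^^ n1) x \<in> darts rot' v" "(?f ^^ n2) x \<in> darts rot' v"
        using W[of n1] W[of n2] dc_darts[of "w n1" rot] dc_darts[of "w n2" rot] n12 r'u vp vq
        unfolding darts_def by auto
      have "(?f ^^ n1) x \<in> B" using n12 unfolding B_def by auto
      moreover have "(?f ^^ n2) x \<notin> B" using AnB n12 by auto
      ultimately show ?thesis using strict[OF d1] Hold[OF PD PF] by blast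
    qed
  qed
qed



lemma pend_step:
  assumes cv: "circ_valid rot C" and qC: "q \<notin> set C" and pq: "p \<noteq> q"
    and qnp: "q \<notin> set (rot p)" and il: "i \<le> length (rot p)" and jl: "j \<le> length (rot q)"
    and emp: "rot p = [] \<Longrightarrow> \<forall>u. rot u = []"
  shows "fc rot v \<le> fc (upd rot (p,q,i,j)) v"
proof (cases "rot p = []")
  case True
  then have "darts rot v = {}" using emp unfolding darts_def by simp
  then show ?thesis unfolding fc_def by simp
next
  case pne: False
  have g: "gwf rot" using circ_gwf[OF cv] .
  have rq: "rot q = []" using cv qC unfolding circ_valid_def by blast
  then have j0: "j = 0" using jl by simp
  define rot' where "rot' = upd rot (p,q,i,j)"
  have r'p: "rot' p = ins i q (rot p)" and r'q: "rot' q = [p]"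
    and r'u: "\<And>u. u \<noteq> p \<Longrightarrow> u \<noteq> q \<Longrightarrow> rot' u = rot u"
    unfolding rot'_def using pq rq j0 by (auto simp: ins_def)
  have dp: "distinct (rot p)" using g unfolding gwf_def by auto
  define a where "a = rot p ! ((i + length (rot p) - 1) mod length (rot p))"
  have ain: "a \<in> set (rot p)" using pne unfolding a_def by simp
  define x where "x = (p, a)"
  let ?f = "phi rot" and ?g = "phi rot'"
  let ?D = "ald rot"
  have xD: "x \<in> ?D" unfolding x_def ald_def using ain by simp
  have pqD: "(p,q) \<notin> ?D" "(q,p) \<notin> ?D" using qnp rq unfolding ald_def by auto
  have N1: "z \<in> ?D \<Longrightarrow> z \<noteq> x \<Longrightarrow> ?g z = ?f z" for z
  proof -
    assume z: "z \<in> ?D" "z \<noteq> x"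
    obtain u c where uc: "z = (u, c)" by (cases z)
    have cin: "c \<in> set (rot u)" using z uc unfolding ald_def by simp
    then have uq: "u \<noteq> q" using rq by auto
    show ?thesis
    proof (cases "u = p")
      case True
      then have "c \<noteq> a" using z uc x_def by auto
      then show ?thesis using succ_ins(1)[OF dp qnp pne il a_def, of c] cin True uc r'p
        unfolding phi_def by simp
    qed (use uq r'u uc in \<open>simp add: phi_def\<close>)
  qed
  have N2: "?g x = (q, p)" "?g (q, p) = (p, q)" "?g (p, q) = ?f x"
    using succ_ins[OF dp qnp pne il a_def] ain r'p r'q
    unfolding phi_def x_def by (auto simp: succ_def idx_def)
  have symO: "z \<in> ?D \<Longrightarrow> u \<in> orbit ?f z \<Longrightarrow> orbit ?f u = orbit ?f z" for z u
    using orb_sym[OF g] unfolding orb_orbit by blast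
  have Rg: "orbit ?g z \<inter> ?D \<subseteq> orbit ?f z" if "z \<in> ?D" for z
  proof (rule R_lemma[where E = "{x}" and N = "{(p,q), (q,p)}"])
    show "{x} \<subseteq> ?D" using xD by simp
    show "{(p, q), (q, p)} \<inter> ?D = {}" using pqD by simp
    show "?f ` ?D \<subseteq> ?D" using phi_in[OF g] by blast
    show "\<And>z u. z \<in> ?D \<Longrightarrow> u \<in> orbit ?f z \<Longrightarrow> orbit ?f u = orbit ?f z" using symO by blast
    show "\<And>u. u \<in> ?D \<Longrightarrow> u \<notin> {x} \<Longrightarrow> ?g u = ?f u" using N1 by blast
    show "\<And>u. u \<in> {x} \<Longrightarrow> ?g u \<in> {(p,q), (q,p)}" using N2 by blast
    show "\<And>u. u \<in> {(p,q), (q,p)} \<Longrightarrow> ?g u \<in> {(p,q), (q,p)} \<or> ?g u \<in> ?f ` {x}"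
      using N2 by blast
    show "\<And>e1 e2. e1 \<in> {x} \<Longrightarrow> e2 \<in> {x} \<Longrightarrow> e2 \<in> orbit ?f e1"
      using orbit_self[of x ?f] by blast
    show "z \<in> ?D" by (rule that)
  qed
  have R0: "\<forall>z \<in> ?D. orb rot' z \<inter> ?D \<subseteq> orb rot z" using Rg unfolding orb_orbit by blast
  have subv: "set (rot u) \<subseteq> set (rot' u)" for u
    using r'p r'q r'u pq rq by (cases "u = p"; cases "u = q") (auto simp: ins_set)
  show ?thesis using vert_mono(1)[OF g subv[of v] R0] unfolding rot'_def .
qed



lemma upd_sub: "p \<noteq> q \<Longrightarrow> set (rot u) \<subseteq> set (upd rot (p,q,i,j) u)"
  by (auto simp: ins_set)

lemma two_le: "p \<in> set C \<Longrightarrow> q \<in> set C \<Longrightarrow> p \<noteq> q \<Longrightarrow> 2 \<le> length C"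
proof -
  assume a: "p \<in> set C" "q \<in> set C" "p \<noteq> q"
  then have "card {p, q} \<le> card (set C)" by (intro card_mono) auto
  then show ?thesis using a(3) card_length[of C] by simp
qed

lemma main:
  assumes "alg_run rot C es rotf Cf Ms"
  shows "stream_ok (set C) rot es \<Longrightarrow> circ_valid rot C \<Longrightarrow> C \<noteq> [] \<Longrightarrow>
     (2 \<le> length C \<longrightarrow> (\<forall>u\<in>set C. rot u \<noteq> [])) \<Longrightarrow> n \<le> fc rot v - 1 \<Longrightarrow>
     n + length (filter (\<lambda>M. v \<in> M) Ms) \<le> fc rotf v - 1"
  using assms
proof (induction arbitrary: n rule: alg_run.induct)
  case (run_Nil rot C)
  then show ?case by simp
next
  case (run_Cons rot C e C' M es rot'' C'' Ms)
  obtain p q i j where e: "e = (p, q, i, j)" by (cases e)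
  have ok: "ext_ok (set C) rot (p,q,i,j)" and sok: "stream_ok (insert q (set C)) (upd rot e) es"
    using run_Cons.prems(1) e by auto
  have pC: "p \<in> set C" and pq: "q \<noteq> p" and qnp: "q \<notin> set (rot p)"
    and il: "i \<le> length (rot p)" and jl: "j \<le> length (rot q)" using ok by auto
  have cv: "circ_valid rot C" and cv': "circ_valid (upd rot e) C'"
    using run_Cons.prems(2) run_Cons.hyps(1) e by auto
  have ne: "\<And>u. u \<notin> set C' \<Longrightarrow> upd rot e u = []" using cv' unfolding circ_valid_def by blast
  have grow: "set (rot u) \<subseteq> set (upd rot e u)" for u using upd_sub pq e by metis
  have step: "alg_step rot C (p,q,i,j) C' M" using run_Cons.hyps(1) e by simp
  show ?case
  proof (cases "q \<in> set C")
    case False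
    then have M: "M = {}" and k: "\<exists>k\<le>length C. C' = ins k q C" using step by auto
    have sC': "set C' = insert q (set C)" using k ins_set by metis
    have emp: "rot p = [] \<Longrightarrow> \<forall>u. rot u = []"
    proof
      fix u assume rp: "rot p = []"
      then have "\<not> 2 \<le> length C" using run_Cons.prems(4) pC by blast
      then have "\<forall>c\<in>set C. c = p" using pC two_le[of p C] by blast
      then have "set C = {p}" using pC by blast
      then show "rot u = []" using cv rp unfolding circ_valid_def by (cases "u = p") auto
    qed
    have fcm: "fc rot v \<le> fc (upd rot e) v"
      using pend_step[OF cv False pq[symmetric] qnp il jl emp] e by simp
    have inv: "2 \<le> length C' \<longrightarrow> (\<forall>u\<in>set C'. upd rot e u \<noteq> [])"
    proof (intro impI ballI)
      fix u assume "u \<in> set C'"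
      show "upd rot e u \<noteq> []"
      proof (cases "u = p \<or> u = q")
        case True then show ?thesis using e pq by (auto simp: ins_def)
      next
        case False
        then have "u \<in> set C" using \<open>u \<in> set C'\<close> sC' by auto
        then have "2 \<le> length C" using pC False two_le by metis
        then have "rot u \<noteq> []" using run_Cons.prems(4) \<open>u \<in> set C\<close> by blast
        then show ?thesis using grow[of u] by auto
      qed
    qed
    have "n \<le> fc (upd rot e) v - 1" using run_Cons.prems(5) fcm by linarith
    then have "n + length (filter (\<lambda>M. v \<in> M) Ms) \<le> fc rot'' v - 1"
      using run_Cons.IH[OF _ cv' _ inv] sok sC' by (metis empty_iff insertI1 list.set(1))
    then show ?thesis using M by simp
  next
    case True
    obtain X where X: "enclosed_side rot C (p,q,i,j) X" "M = moved rot C X"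
      and cyc: "cyc_eq (filter (\<lambda>v. v \<notin> M) C) (filter (\<lambda>v. v \<notin> M) C')" using step True by auto
    have MC: "M \<subseteq> set C" using X(2) unfolding moved_def by blast
    have Mne: "u \<in> M \<Longrightarrow> rot u \<noteq> []" for u using X(2) unfolding moved_def is_outc_def by auto
    obtain r where r: "rotate r (filter (\<lambda>v. v \<notin> M) C) = filter (\<lambda>v. v \<notin> M) C'"
      using cyc unfolding cyc_eq_def by blast
    have sf: "set (filter (\<lambda>v. v \<notin> M) C) = set (filter (\<lambda>v. v \<notin> M) C')"
      using r by (metis set_rotate)
    have sC': "set C' = set C"
    proof
      show "set C' \<subseteq> set C" using sf MC by auto
      show "set C \<subseteq> set C'"
      proof
        fix u assume u: "u \<in> set C"
        show "u \<in> set C'"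
        proof (cases "u \<in> M")
          case True
          then have "upd rot e u \<noteq> []" using Mne grow[of u] by auto
          then show ?thesis using ne by blast
        next
          case False then show ?thesis using sf u by auto
        qed
      qed
    qed
    have two: "2 \<le> length C" using two_le pC True pq by metis
    have rp: "rot p \<noteq> []" "rot q \<noteq> []" using run_Cons.prems(4) two pC True by auto
    note MS = move_step[OF cv pC True pq[symmetric] rp qnp il jl X(1)]
    have inv: "2 \<le> length C' \<longrightarrow> (\<forall>u\<in>set C'. upd rot e u \<noteq> [])"
      using run_Cons.prems(4) two sC' grow by (metis subset_empty set_empty)
    define n' where "n' = n + (if v \<in> M then 1 else 0)"
    have "n' \<le> fc (upd rot e) v - 1"
    proof (cases "v \<in> M")
      case True
      then have "fc rot v < fc (upd rot e) v" using MS(2) X(2) e by simp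
      moreover have "0 < fc rot v" using fc_pos Mne True by metis
      ultimately show ?thesis using run_Cons.prems(5) True unfolding n'_def by simp
    next
      case False
      have "fc rot v \<le> fc (upd rot e) v" using MS(1)[of v] e by simp
      then show ?thesis using False run_Cons.prems(5) unfolding n'_def by simp
    qed
    moreover have "C' \<noteq> []" using sC' run_Cons.prems(3) by auto
    moreover have "stream_ok (set C') (upd rot e) es" using sok sC' True by (simp add: insert_absorb)
    ultimately have "n' + length (filter (\<lambda>M. v \<in> M) Ms) \<le> fc rot'' v - 1"
      using run_Cons.IH[OF _ cv' _ inv] by blast
    then show ?thesis unfolding n'_def by (cases "v \<in> M") auto
  qed
qed

theorem lemma4:
  fixes v0 v :: 'v and es :: "'v event list"
  assumes "stream_ok {v0} (\<lambda>_. []) es"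
    and "alg_run (\<lambda>_. []) [v0] es rotf Cf Ms"
  shows "length (filter (\<lambda>M. v \<in> M) Ms) \<le> length (rotf v) - 1"
proof -
  have cv: "circ_valid (\<lambda>_. []) [v0]" unfolding circ_valid_def cyc_eq_def by simp
  have "0 + length (filter (\<lambda>M. v \<in> M) Ms) \<le> fc rotf v - 1"
    using main[OF assms(2), of 0 v] assms(1) cv by simp
  then show ?thesis using fc_le_deg[of rotf v] by linarith
qed


end
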